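(* Let $c,g,e\in\mathbb{R}$, $h\in(0,1]$, $\tau>0$, and let $\theta^j=(\theta^j_i)_{i\in\mathbb{Z}}\in\ell^2(\mathbb{Z})$. Let $T^{j+1}$ be the operator on $\ell^2(\mathbb{Z})$ with matrix entries $$(T^{j+1})_{i,r}=\delta_{i,r}-\frac{c\tau}{2h}(\delta_{i+1,r}-\delta_{i-1,r})-\frac{g\tau}{2h}\Big[\theta^j_i(\delta_{i+1,r}-\delta_{i-1,r})+\delta_{i,r}(\theta^j_{i+1}-\theta^j_{i-1})\Big]-\frac{e\tau}{2h^3}\big[\delta_{i+2,r}-2\delta_{i+1,r}+2\delta_{i-1,r}-\delta_{i-2,r}\big],$$ i.e. the Jacobian $\partial\theta^{j+1}_i/\partial\theta^j_r$ of the one-step map of the scheme $$\frac{\theta^{j+1}_i-\theta^j_i}{\tau}+c\frac{\theta^j_{i+1}-\theta^j_{i-1}}{2h}+g\,\theta^j_i\frac{\theta^j_{i+1}-\theta^j_{i-1}}{2h}+e\frac{\theta^j_{i+2}-2\theta^j_{i+1}+2\theta^j_{i-1}-\theta^j_{i-2}}{2h^3}=0 .$$ Suppose $\tau\le K h^6$ for some constant $K$, and $\sup_i|\theta^j_i|\le B$, $\sup_i|\theta^j_{i+1}-\theta^j_i|/h\le B$. Then there is a constant $a$ depending only on $c,g,e,K,B$ (and not on $h,\tau$) such that the spectral norm satisfies $\|T^{j+1}\|\le e^{a\tau}$.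
   Context: $\delta_{i,r}$ is the Kronecker delta; the spectral norm is the operator norm on $\ell^2(\mathbb{Z})$. *)

theory Defs
  imports "HOL-Analysis.Analysis"
begin

definition kdelta :: "int \<Rightarrow> int \<Rightarrow> real" where
  "kdelta i r = (if i = r then 1 else 0)"

definition in_l2 :: "(int \<Rightarrow> real) \<Rightarrow> bool" where
  "in_l2 x \<longleftrightarrow> (\<lambda>i. (x i)\<^sup>2) summable_on UNIV"

definition l2norm :: "(int \<Rightarrow> real) \<Rightarrow> real" where
  "l2norm x = sqrt (\<Sum>\<^sub>\<infinity>i. (x i)\<^sup>2)"

definition Tmat :: "real \<Rightarrow> real \<Rightarrow> real \<Rightarrow> real \<Rightarrow> real \<Rightarrow> (int \<Rightarrow> real) \<Rightarrow> int \<Rightarrow> int \<Rightarrow> real" where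
  "Tmat c g e h \<tau> \<theta> i r =
     kdelta i r
     - c * \<tau> / (2 * h) * (kdelta (i + 1) r - kdelta (i - 1) r)
     - g * \<tau> / (2 * h) * (\<theta> i * (kdelta (i + 1) r - kdelta (i - 1) r)
                           + kdelta i r * (\<theta> (i + 1) - \<theta> (i - 1)))
     - e * \<tau> / (2 * h ^ 3) * (kdelta (i + 2) r - 2 * kdelta (i + 1) r
                                + 2 * kdelta (i - 1) r - kdelta (i - 2) r)"

definition Top :: "real \<Rightarrow> real \<Rightarrow> real \<Rightarrow> real \<Rightarrow> real \<Rightarrow> (int \<Rightarrow> real) \<Rightarrow> (int \<Rightarrow> real) \<Rightarrow> (int \<Rightarrow> real)" where
  "Top c g e h \<tau> \<theta> x = (\<lambda>i. \<Sum>\<^sub>\<infinity>r. Tmat c g e h \<tau> \<theta> i r * x r)"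

end

theory Submission
  imports Defs
begin


lemma sm_cmp:
  fixes f g :: "int \<Rightarrow> real"
  assumes "f summable_on UNIV" "\<And>i. \<bar>g i\<bar> \<le> f i"
  shows "g summable_on UNIV"
proof -
  have "(\<lambda>i. norm (g i)) summable_on UNIV"
    by (rule summable_on_comparison_test[OF assms(1)]) (use assms(2) in auto)
  thus ?thesis using summable_on_iff_abs_summable_on_real by blast
qed

lemma sm_diff:
  fixes f g :: "int \<Rightarrow> real"
  assumes "f summable_on UNIV" "g summable_on UNIV"
  shows "(\<lambda>i. f i - g i) summable_on UNIV"
  using summable_on_add[OF assms(1) summable_on_uminus[THEN iffD2, OF assms(2)]] by simp

lemma is_diff:
  fixes f g :: "int \<Rightarrow> real"
  assumes "f summable_on UNIV" "g summable_on UNIV"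
  shows "(\<Sum>\<^sub>\<infinity>i. f i - g i) = (\<Sum>\<^sub>\<infinity>i. f i) - (\<Sum>\<^sub>\<infinity>i. g i)"
  using infsum_add[OF assms(1) summable_on_uminus[THEN iffD2, OF assms(2)]] infsum_uminus[of g]
  by simp

lemma shift_inj: "inj_on (\<lambda>i::int. i + k) UNIV" by (auto simp: inj_on_def)
lemma shift_img: "(\<lambda>i::int. i + k) ` UNIV = UNIV"
  by (metis surj_def add_diff_cancel diff_add_cancel)

lemma sm_shift:
  fixes f :: "int \<Rightarrow> real"
  assumes "f summable_on UNIV"
  shows "(\<lambda>i. f (i + k)) summable_on UNIV"
  using summable_on_reindex[OF shift_inj[of k], of f] assms shift_img[of k] by (simp add: comp_def)

lemma is_shift:
  fixes f :: "int \<Rightarrow> real"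
  shows "(\<Sum>\<^sub>\<infinity>i. f (i + k)) = (\<Sum>\<^sub>\<infinity>i. f i)"
  using infsum_reindex[OF shift_inj[of k], of f] shift_img[of k] by (simp add: comp_def)

lemma is_tele:
  fixes f :: "int \<Rightarrow> real"
  assumes "f summable_on UNIV"
  shows "(\<Sum>\<^sub>\<infinity>i. f i - f (i - k)) = 0"
  using is_diff[OF assms sm_shift[OF assms, of "-k"]] is_shift[of f "-k"] by simp

lemma sm_tele:
  fixes f :: "int \<Rightarrow> real"
  assumes "f summable_on UNIV"
  shows "(\<lambda>i. f i - f (i - k)) summable_on UNIV"
  using sm_diff[OF assms sm_shift[OF assms, of "-k"]] by simp

lemma l2_shift: "in_l2 x \<Longrightarrow> in_l2 (\<lambda>i. x (i + k))"
  unfolding in_l2_def by (rule sm_shift)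

lemma sm_prod:
  fixes x y m :: "int \<Rightarrow> real"
  assumes "in_l2 x" "in_l2 y" "\<And>i. \<bar>m i\<bar> \<le> M"
  shows "(\<lambda>i. m i * x i * y i) summable_on UNIV"
proof (rule sm_cmp)
  show "(\<lambda>i. M * ((x i)\<^sup>2 + (y i)\<^sup>2)) summable_on UNIV"
    using assms(1,2) unfolding in_l2_def by (intro summable_on_cmult_right summable_on_add)
  fix i
  have "\<bar>x i * y i\<bar> \<le> (x i)\<^sup>2 + (y i)\<^sup>2"
  proof -
    have "0 \<le> (\<bar>x i\<bar> - \<bar>y i\<bar>)\<^sup>2" by simp
    hence "2 * (\<bar>x i\<bar> * \<bar>y i\<bar>) \<le> (x i)\<^sup>2 + (y i)\<^sup>2"
      by (simp add: power2_eq_square algebra_simps)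
    moreover have "0 \<le> \<bar>x i\<bar> * \<bar>y i\<bar>" by simp
    ultimately show ?thesis unfolding abs_mult by linarith
  qed
  moreover have "\<bar>m i\<bar> \<le> M" by (rule assms(3))
  ultimately have "\<bar>m i\<bar> * \<bar>x i * y i\<bar> \<le> M * ((x i)\<^sup>2 + (y i)\<^sup>2)"
    by (intro mult_mono) auto
  thus "\<bar>m i * x i * y i\<bar> \<le> M * ((x i)\<^sup>2 + (y i)\<^sup>2)" by (simp add: abs_mult mult.assoc)
qed



lemma Top_eq:
  assumes "h \<noteq> 0"
  shows "Top c g e h \<tau> \<theta> x i = x i - \<tau> * (c/(2*h)*(x(i+1) - x(i-1))
      + g/(2*h)*(\<theta> i*(x(i+1)-x(i-1)) + x i*(\<theta>(i+1)-\<theta>(i-1)))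
      + e/(2*h^3)*(x(i+2) - 2*x(i+1) + 2*x(i-1) - x(i-2)))"
proof -
  have "Top c g e h \<tau> \<theta> x i = (\<Sum>\<^sub>\<infinity>r\<in>{i-2,i-1,i,i+1,i+2}. Tmat c g e h \<tau> \<theta> i r * x r)"
    unfolding Top_def by (rule infsum_cong_neutral) (auto simp: Tmat_def kdelta_def)
  also have "\<dots> = (\<Sum>r\<in>{i-2,i-1,i,i+1,i+2}. Tmat c g e h \<tau> \<theta> i r * x r)"
    by simp
  also have "\<dots> = x i - \<tau> * (c/(2*h)*(x(i+1) - x(i-1))
      + g/(2*h)*(\<theta> i*(x(i+1)-x(i-1)) + x i*(\<theta>(i+1)-\<theta>(i-1)))
      + e/(2*h^3)*(x(i+2) - 2*x(i+1) + 2*x(i-1) - x(i-2)))"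
  proof -
    define A where "A = c*\<tau>/(2*h)"
    define G where "G = g*\<tau>/(2*h)"
    define E where "E = e*\<tau>/(2*h^3)"
    have eA: "\<tau> * (c/(2*h)*X) = A*X" for X by (simp add: A_def)
    have eG: "\<tau> * (g/(2*h)*X) = G*X" for X by (simp add: G_def)
    have eE: "\<tau> * (e/(2*h^3)*X) = E*X" for X by (simp add: E_def)
    show ?thesis
      unfolding distrib_left eA eG eE
      unfolding Tmat_def A_def[symmetric] G_def[symmetric] E_def[symmetric]
      by (simp add: kdelta_def algebra_simps)
  qed
  finally show ?thesis .
qed

lemma sq5:
  fixes p1 p2 p3 p4 p5 :: real
  shows "(p1+p2+p3+p4+p5)^2 \<le> 5*(p1^2+p2^2+p3^2+p4^2+p5^2)"
proof -
  have "5*(p1^2+p2^2+p3^2+p4^2+p5^2) - (p1+p2+p3+p4+p5)^2 =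
     (p1-p2)^2+(p1-p3)^2+(p1-p4)^2+(p1-p5)^2+(p2-p3)^2+(p2-p4)^2+(p2-p5)^2
     +(p3-p4)^2+(p3-p5)^2+(p4-p5)^2"
    by (simp add: power2_eq_square algebra_simps)
  moreover have "0 \<le> (p1-p2)^2+(p1-p3)^2+(p1-p4)^2+(p1-p5)^2+(p2-p3)^2+(p2-p4)^2+(p2-p5)^2
     +(p3-p4)^2+(p3-p5)^2+(p4-p5)^2" by simp
  ultimately show ?thesis by linarith
qed

lemma coefsq:
  fixes u z M :: real
  assumes "\<bar>u\<bar> \<le> M"
  shows "(u*z)^2 \<le> M^2 * z^2"
proof -
  have "u^2 \<le> M^2" using assms by (metis abs_le_square_iff abs_of_nonneg abs_ge_zero order_trans power2_abs)
  thus ?thesis by (simp add: power_mult_distrib mult_right_mono)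
qed



lemma key:
  fixes c g e K B h \<tau> :: real and \<theta> x :: "int \<Rightarrow> real"
  assumes h0: "0 < h" and h1: "h \<le> 1" and t0: "0 < \<tau>" and tK: "\<tau> \<le> K * h ^ 6"
    and th: "\<forall>i. \<bar>\<theta> i\<bar> \<le> B" and dth: "\<forall>i. \<bar>\<theta> (i + 1) - \<theta> i\<bar> / h \<le> B"
    and xl: "in_l2 x"
  shows "in_l2 (Top c g e h \<tau> \<theta> x) \<and>
    (\<Sum>\<^sub>\<infinity>i. (Top c g e h \<tau> \<theta> x i)^2)
      \<le> (1 + 5*\<tau>*(3*\<bar>g\<bar>*B + 5*K*(\<bar>c\<bar>+\<bar>g\<bar>*B+\<bar>e\<bar>)^2)) * (\<Sum>\<^sub>\<infinity>i. (x i)^2)"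
proof -
  define M where "M = \<bar>c\<bar>+\<bar>g\<bar>*B+\<bar>e\<bar>"
  define C0 where "C0 = 3*\<bar>g\<bar>*B + 5*K*M^2"
  have B0: "0 \<le> B" using th by (metis abs_ge_zero order_trans)
  have h6: "0 < h^6" using h0 by simp
  have K0: "0 \<le> K"
  proof (rule ccontr)
    assume "\<not> 0 \<le> K" hence "K * h^6 < 0" using h6 by (simp add: mult_neg_pos)
    thus False using tK t0 by linarith
  qed
  have tK': "\<tau> / h^6 \<le> K" using tK h6 by (simp add: pos_divide_le_eq)
  have d0: "\<bar>\<theta> (i + 1) - \<theta> i\<bar> \<le> B * h" for i
    using dth h0 by (simp add: pos_divide_le_eq)
  have d1: "\<bar>\<theta> i - \<theta> (i - 1)\<bar> \<le> B * h" for i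
    using d0[of "i - 1"] by simp
  have d2: "\<bar>\<theta> (i + 1) - \<theta> (i - 1)\<bar> \<le> 2 * B * h" for i
    using d0[of i] d1[of i] by linarith
  have hh: "h^2 \<le> 1" "0 \<le> h^2" using h0 h1 by (auto simp: power_le_one)
  have h3: "h^3 \<le> 1" using h0 h1 by (auto simp: power_le_one)
  define \<alpha> where "\<alpha> = c/(2*h)"
  define \<gamma> where "\<gamma> = g/(2*h)"
  define \<beta> where "\<beta> = e/(2*h^3)"
  define a where "a i = \<alpha>*(x(i+1) - x(i-1))
      + \<gamma>*(\<theta> i*(x(i+1)-x(i-1)) + x i*(\<theta>(i+1)-\<theta>(i-1)))
      + \<beta>*(x(i+2) - 2*x(i+1) + 2*x(i-1) - x(i-2))" for i
  define y where "y i = x i - \<tau> * a i" for i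
  have Ty: "Top c g e h \<tau> \<theta> x = y"
    by (rule ext) (use h0 in \<open>simp add: Top_eq y_def a_def \<alpha>_def \<beta>_def \<gamma>_def\<close>)
  define Q where "Q i = (x(i+1))^2 + (x(i-1))^2 + (x i)^2 + (x(i+2))^2 + (x(i-2))^2" for i
  define F where "F i = x i * x (i+1)" for i
  define G where "G i = x i * x (i+2)" for i
  define J where "J i = \<theta> i * x i * x (i+1)" for i
  define R where "R i = -(\<theta> i - \<theta>(i-1)) * x(i-1) * x i + (x i)^2 * (\<theta>(i+1) - \<theta>(i-1))" for i
  define Tel where "Tel i = (\<alpha> - 2*\<beta>) * (F i - F (i - 1)) + \<beta> * (G i - G (i - 2))
      + \<gamma> * (J i - J (i - 1))" for i
  have xa: "x i * a i = Tel i + \<gamma> * R i" for i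
    by (simp add: a_def Tel_def F_def G_def J_def R_def algebra_simps power2_eq_square)
  have Rb: "\<bar>2*\<tau>*\<gamma>*R i\<bar> \<le> \<tau> * (3*\<bar>g\<bar>*B) * Q i" for i
  proof -
    have p1: "\<bar>x(i-1) * x i\<bar> \<le> (x(i-1))^2 + (x i)^2"
    proof -
      have "0 \<le> (\<bar>x (i-1)\<bar> - \<bar>x i\<bar>)\<^sup>2" by simp
      hence "2 * (\<bar>x (i-1)\<bar> * \<bar>x i\<bar>) \<le> (x (i-1))\<^sup>2 + (x i)\<^sup>2"
        by (simp add: power2_eq_square algebra_simps)
      moreover have "0 \<le> \<bar>x (i-1)\<bar> * \<bar>x i\<bar>" by simp
      ultimately show ?thesis unfolding abs_mult by linarith
    qed
    have r1: "\<bar>(\<theta> i - \<theta>(i-1)) * x(i-1) * x i\<bar> \<le> (B*h) * ((x(i-1))^2 + (x i)^2)"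
    proof -
      have "\<bar>\<theta> i - \<theta>(i-1)\<bar> * \<bar>x(i-1) * x i\<bar> \<le> (B*h) * ((x(i-1))^2 + (x i)^2)"
        by (rule mult_mono[OF d1 p1]) (use B0 h0 in auto)
      thus ?thesis by (simp add: abs_mult mult.assoc)
    qed
    have r2: "\<bar>(x i)^2 * (\<theta>(i+1) - \<theta>(i-1))\<bar> \<le> (x i)^2 * (2*B*h)"
      using mult_left_mono[OF d2[of i], of "(x i)^2"] by (simp add: abs_mult)
    have "\<bar>R i\<bar> \<le> (B*h) * ((x(i-1))^2 + (x i)^2) + (x i)^2 * (2*B*h)"
      unfolding R_def using r1 r2 by (smt (verit) mult_minus_left)
    also have "\<dots> = h * (B*((x(i-1))^2 + 3*(x i)^2))" by (simp add: algebra_simps)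
    also have "\<dots> \<le> h * (3*B*Q i)"
    proof -
      have "(x(i-1))^2 + 3*(x i)^2 \<le> 3 * Q i" unfolding Q_def
        using zero_le_power2[of "x(i+1)"] zero_le_power2[of "x(i-1)"] zero_le_power2[of "x(i+2)"]
          zero_le_power2[of "x(i-2)"] by (smt (verit))
      hence "B*((x(i-1))^2 + 3*(x i)^2) \<le> B*(3*Q i)" by (rule mult_left_mono[OF _ B0])
      hence "h*(B*((x(i-1))^2 + 3*(x i)^2)) \<le> h*(B*(3*Q i))" using h0 by simp
      thus ?thesis by (simp add: algebra_simps)
    qed
    finally have Rb0: "\<bar>R i\<bar> \<le> h * (3*B*Q i)" .
    have "\<bar>2*\<tau>*\<gamma>*R i\<bar> = \<tau> * \<bar>g\<bar> / h * \<bar>R i\<bar>"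
      using t0 h0 by (simp add: \<gamma>_def abs_mult)
    also have "\<dots> \<le> \<tau> * \<bar>g\<bar> / h * (h * (3*B*Q i))"
      by (rule mult_left_mono[OF Rb0]) (use t0 h0 in simp)
    also have "\<dots> = \<tau> * (3*\<bar>g\<bar>*B) * Q i" using h0 by (simp add: field_simps)
    finally show ?thesis .
  qed
  define u1 where "u1 i = c*h^2/2 + g*h^2*\<theta> i/2 - e" for i
  define u0 where "u0 i = g*h^2*(\<theta>(i+1)-\<theta>(i-1))/2" for i
  have ab: "a i = (u1 i * x(i+1) + (- u1 i) * x(i-1) + u0 i * x i + (e/2) * x(i+2) + (-e/2) * x(i-2)) / h^3" for i
    using h0 by (simp add: a_def u1_def u0_def \<alpha>_def \<beta>_def \<gamma>_def field_simps power2_eq_square power3_eq_cube)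
  have u1b: "\<bar>u1 i\<bar> \<le> M" for i
  proof -
    have "\<bar>c\<bar>*h^2 \<le> \<bar>c\<bar>*1" by (rule mult_left_mono[OF hh(1)]) simp
    hence "\<bar>c*h^2/2\<bar> \<le> \<bar>c\<bar>" using hh by (simp add: abs_mult)
    moreover have "\<bar>g*h^2*\<theta> i/2\<bar> \<le> \<bar>g\<bar>*B"
    proof -
      have "\<bar>g*h^2*\<theta> i\<bar> = \<bar>g\<bar>*(h^2*\<bar>\<theta> i\<bar>)" by (simp add: abs_mult)
      also have "h^2*\<bar>\<theta> i\<bar> \<le> 1 * B" using hh th by (intro mult_mono) auto
      hence "\<bar>g\<bar>*(h^2*\<bar>\<theta> i\<bar>) \<le> \<bar>g\<bar>*B" by (simp add: mult_left_mono)
      finally show ?thesis using B0 by simp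
    qed
    ultimately show ?thesis unfolding u1_def M_def by linarith
  qed
  have u0b: "\<bar>u0 i\<bar> \<le> M" for i
  proof -
    have "\<bar>u0 i\<bar> = \<bar>g\<bar>*(h^2*\<bar>\<theta>(i+1)-\<theta>(i-1)\<bar>)/2" by (simp add: u0_def abs_mult)
    also have "h^2*\<bar>\<theta>(i+1)-\<theta>(i-1)\<bar> \<le> 1 * (2*B)"
    proof (rule mult_mono)
      have "2*B*h \<le> 2*B*1" using B0 h1 by (intro mult_left_mono) auto
      thus "\<bar>\<theta>(i+1)-\<theta>(i-1)\<bar> \<le> 2*B" using d2[of i] by simp
    qed (use hh B0 in auto)
    hence "\<bar>g\<bar>*(h^2*\<bar>\<theta>(i+1)-\<theta>(i-1)\<bar>) \<le> \<bar>g\<bar>*(1*(2*B))" by (rule mult_left_mono) simp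
    hence "\<bar>g\<bar>*(h^2*\<bar>\<theta>(i+1)-\<theta>(i-1)\<bar>)/2 \<le> \<bar>g\<bar>*(1*(2*B))/2" by (rule divide_right_mono) simp
    finally show ?thesis unfolding M_def using B0 by simp
  qed
  have eb: "\<bar>e/2\<bar> \<le> M" "\<bar>-e/2\<bar> \<le> M" "\<bar>- u1 i\<bar> \<le> M" for i
    using B0 u1b[of i] unfolding M_def by (auto simp: mult_nonneg_nonneg)
  have a2: "\<tau>^2 * (a i)^2 \<le> \<tau> * (5*K*M^2) * Q i" for i
  proof -
    have "(u1 i * x(i+1) + (- u1 i) * x(i-1) + u0 i * x i + (e/2) * x(i+2) + (-e/2) * x(i-2))^2
        \<le> 5 * ((u1 i * x(i+1))^2 + ((- u1 i) * x(i-1))^2 + (u0 i * x i)^2 + ((e/2) * x(i+2))^2 + ((-e/2) * x(i-2))^2)"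
      by (rule sq5)
    also have "\<dots> \<le> 5 * (M^2 * Q i)"
      using coefsq[OF u1b[of i], of "x(i+1)"] coefsq[OF eb(3)[of i], of "x(i-1)"]
        coefsq[OF u0b[of i], of "x i"] coefsq[OF eb(1), of "x(i+2)"] coefsq[OF eb(2), of "x(i-2)"]
      unfolding Q_def by (simp add: algebra_simps)
    finally have b2: "(a i * h^3)^2 \<le> 5 * (M^2 * Q i)" using h0 by (simp add: ab)
    have "\<tau>^2 * (a i)^2 = \<tau> * (\<tau> / h^6) * (a i * h^3)^2"
      using h0 by (simp add: power_mult_distrib power2_eq_square field_simps)
    also have "\<dots> \<le> \<tau> * K * (5 * (M^2 * Q i))"
      by (rule mult_mono[OF mult_left_mono[OF tK'] b2]) (use t0 K0 in auto)
    finally show ?thesis by (simp add: algebra_simps)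
  qed
  have pt: "(y i)^2 \<le> (x i)^2 + \<tau> * C0 * Q i - 2*\<tau>*Tel i" for i
  proof -
    have "(y i)^2 = (x i)^2 - 2*\<tau>*(x i * a i) + \<tau>^2 * (a i)^2"
      by (simp add: y_def power2_eq_square algebra_simps)
    also have "\<dots> = (x i)^2 - 2*\<tau>*(Tel i + \<gamma>*R i) + \<tau>^2 * (a i)^2"
      by (simp only: xa)
    also have "\<dots> = (x i)^2 - 2*\<tau>*Tel i - 2*\<tau>*\<gamma>*R i + \<tau>^2 * (a i)^2"
      by (simp add: algebra_simps)
    finally show ?thesis using Rb[of i] a2[of i] unfolding C0_def by (simp add: algebra_simps abs_le_iff)
  qed
  have x2: "(\<lambda>i. (x i)^2) summable_on UNIV" using xl by (simp add: in_l2_def)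
  have xs: "(\<lambda>i. (x (i + k))^2) summable_on UNIV" for k using sm_shift[OF x2] by simp
  have Qs: "Q summable_on UNIV"
    using summable_on_add[OF summable_on_add[OF summable_on_add[OF summable_on_add[OF xs[of 1] xs[of "-1"]] x2] xs[of 2]] xs[of "-2"]]
    unfolding Q_def by simp
  have xm: "(\<lambda>i. (x (i - k))^2) summable_on UNIV" for k using xs[of "-k"] by simp
  have Qsum: "(\<Sum>\<^sub>\<infinity>i. Q i) = 5 * (\<Sum>\<^sub>\<infinity>i. (x i)^2)"
  proof -
    have "(\<Sum>\<^sub>\<infinity>i. Q i) = (\<Sum>\<^sub>\<infinity>i. (x (i+1))^2) + (\<Sum>\<^sub>\<infinity>i. (x (i - 1))^2) + (\<Sum>\<^sub>\<infinity>i. (x i)^2)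
        + (\<Sum>\<^sub>\<infinity>i. (x (i+2))^2) + (\<Sum>\<^sub>\<infinity>i. (x (i - 2))^2)"
      unfolding Q_def
      by (simp add: infsum_add summable_on_add xs xm x2)
    moreover have "(\<Sum>\<^sub>\<infinity>i. (x (i + k))^2) = (\<Sum>\<^sub>\<infinity>i. (x i)^2)" for k
      using is_shift[of "\<lambda>i. (x i)^2" k] by simp
    moreover have "(\<Sum>\<^sub>\<infinity>i. (x (i - k))^2) = (\<Sum>\<^sub>\<infinity>i. (x i)^2)" for k
      using is_shift[of "\<lambda>i. (x i)^2" "-k"] by simp
    ultimately show ?thesis by simp
  qed
  have one: "\<bar>(\<lambda>_. 1::real) i\<bar> \<le> 1" for i by simp
  have Fs: "F summable_on UNIV"
    using sm_prod[OF xl l2_shift[OF xl, of 1] one] unfolding F_def by simp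
  have Gs: "G summable_on UNIV"
    using sm_prod[OF xl l2_shift[OF xl, of 2] one] unfolding G_def by simp
  have Js: "J summable_on UNIV"
    using sm_prod[OF xl l2_shift[OF xl, of 1], of \<theta> B] th unfolding J_def by simp
  have Tels: "Tel summable_on UNIV"
    unfolding Tel_def
    by (intro summable_on_add summable_on_cmult_right sm_tele Fs Gs Js)
  have Tel0: "(\<Sum>\<^sub>\<infinity>i. Tel i) = 0"
    unfolding Tel_def
    apply (subst infsum_add, (intro summable_on_add summable_on_cmult_right sm_tele Fs Gs Js)+)+
    apply (simp add: infsum_cmult_right' is_tele Fs Gs Js)
    done
  define P where "P i = (x i)^2 + \<tau> * C0 * Q i - 2*\<tau>*Tel i" for i
  have Ps: "P summable_on UNIV"
    unfolding P_def
    by (intro sm_diff summable_on_add summable_on_cmult_right x2 Qs Tels)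
  have Psum: "(\<Sum>\<^sub>\<infinity>i. P i) = (1 + 5*\<tau>*C0) * (\<Sum>\<^sub>\<infinity>i. (x i)^2)"
  proof -
    have "(\<Sum>\<^sub>\<infinity>i. P i) = (\<Sum>\<^sub>\<infinity>i. (x i)^2) + \<tau> * C0 * (\<Sum>\<^sub>\<infinity>i. Q i) - 2*\<tau>*(\<Sum>\<^sub>\<infinity>i. Tel i)"
      unfolding P_def
      by (simp add: is_diff infsum_add summable_on_add summable_on_cmult_right x2 Qs Tels infsum_cmult_right')
    thus ?thesis using Qsum Tel0 by (simp add: algebra_simps)
  qed
  have ys: "in_l2 y"
    unfolding in_l2_def by (rule sm_cmp[OF Ps]) (use pt in \<open>simp add: P_def\<close>)
  have "(\<Sum>\<^sub>\<infinity>i. (y i)^2) \<le> (\<Sum>\<^sub>\<infinity>i. P i)"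
  proof (rule infsum_mono[OF _ Ps])
    show "(\<lambda>i. (y i)^2) summable_on UNIV" using ys by (simp add: in_l2_def)
    show "(y i)^2 \<le> P i" for i using pt[of i] by (simp add: P_def)
  qed
  with Psum ys show ?thesis unfolding Ty C0_def M_def by simp
qed


theorem mainTheorem3:
  fixes c g e K B :: real
  shows "\<exists>a::real. \<forall>(h::real) (\<tau>::real) (\<theta>::int \<Rightarrow> real).
           0 < h \<and> h \<le> 1 \<and> 0 < \<tau> \<and> \<tau> \<le> K * h ^ 6 \<and> in_l2 \<theta>
           \<and> (\<forall>i. \<bar>\<theta> i\<bar> \<le> B) \<and> (\<forall>i. \<bar>\<theta> (i + 1) - \<theta> i\<bar> / h \<le> B)
           \<longrightarrow> (\<forall>x. in_l2 x \<longrightarrow>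
                   in_l2 (Top c g e h \<tau> \<theta> x) \<and>
                   l2norm (Top c g e h \<tau> \<theta> x) \<le> exp (a * \<tau>) * l2norm x)"
proof -
  define C0 where "C0 = 3*\<bar>g\<bar>*B + 5*K*(\<bar>c\<bar>+\<bar>g\<bar>*B+\<bar>e\<bar>)^2"
  show ?thesis
  proof (rule exI[of _ "5*C0/2"], intro allI impI, elim conjE)
    fix h \<tau> :: real and \<theta> x :: "int \<Rightarrow> real"
    assume h0: "0 < h" and h1: "h \<le> 1" and t0: "0 < \<tau>" and tK: "\<tau> \<le> K * h ^ 6"
      and th: "\<forall>i. \<bar>\<theta> i\<bar> \<le> B" and dth: "\<forall>i. \<bar>\<theta> (i + 1) - \<theta> i\<bar> / h \<le> B"
      and xl: "in_l2 x"
    note k = key[OF h0 h1 t0 tK th dth xl, of c g e]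
    define S where "S = (\<Sum>\<^sub>\<infinity>i. (x i)^2)"
    have S0: "0 \<le> S" unfolding S_def by (rule infsum_nonneg) simp
    have "(\<Sum>\<^sub>\<infinity>i. (Top c g e h \<tau> \<theta> x i)^2) \<le> (1 + 5*\<tau>*C0) * S"
      using k unfolding C0_def S_def by simp
    also have "\<dots> \<le> exp (5*\<tau>*C0) * S"
      using exp_ge_add_one_self[of "5*\<tau>*C0"] S0 by (intro mult_right_mono) auto
    finally have le: "(\<Sum>\<^sub>\<infinity>i. (Top c g e h \<tau> \<theta> x i)^2) \<le> exp (5*\<tau>*C0) * S" .
    have ex: "exp (5*\<tau>*C0) = (exp (5*C0/2*\<tau>))^2"
      by (simp add: power2_eq_square exp_add[symmetric])
    have "l2norm (Top c g e h \<tau> \<theta> x) \<le> sqrt (exp (5*\<tau>*C0) * S)"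
      unfolding l2norm_def using le by simp
    also have "\<dots> = exp (5*C0/2*\<tau>) * l2norm x"
      unfolding ex l2norm_def S_def real_sqrt_mult real_sqrt_abs by simp
    finally show "in_l2 (Top c g e h \<tau> \<theta> x) \<and>
         l2norm (Top c g e h \<tau> \<theta> x) \<le> exp (5*C0/2 * \<tau>) * l2norm x"
      using k by simp
  qed
qed

end
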